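(* Let $X$ be a regular Lindelöf $\Sigma$-space. If $X$ is homeomorphic to a subspace of a separable Hausdorff space, then $w(X)\leq\mathfrak c$.
   Context: A Hausdorff space $X$ is a Lindelöf $\Sigma$-space if there are families $\mathcal F$ and $\mathcal C$ of closed subsets of $X$ such that $\mathcal F$ is countable, every element of $\mathcal C$ is compact, $X=\bigcup\mathcal C$, and for every $C\in\mathcal C$ and every open $U\supseteq C$ there is $F\in\mathcal F$ with $C\subseteq F\subseteq U$. $w$ weight, $\mathfrak c=2^\omega$. *)

theory Defs
  imports "HOL-Analysis.Analysis" "HOL-Library.Equipollence"
begin

definition Lindelof_Sigma_space :: "'a topology \<Rightarrow> bool" where
  "Lindelof_Sigma_space X \<equiv> Hausdorff_space X \<and>
     (\<exists>\<F> \<C>. countable \<F> \<and> (\<forall>F\<in>\<F>. closedin X F) \<and>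
        (\<forall>C\<in>\<C>. closedin X C \<and> compactin X C) \<and>
        topspace X = \<Union>\<C> \<and>
        (\<forall>C\<in>\<C>. \<forall>U. openin X U \<and> C \<subseteq> U \<longrightarrow> (\<exists>F\<in>\<F>. C \<subseteq> F \<and> F \<subseteq> U)))"

definition base_of_topology :: "'a topology \<Rightarrow> 'a set set \<Rightarrow> bool" where
  "base_of_topology X \<B> \<equiv> (\<forall>V\<in>\<B>. openin X V) \<and>
     (\<forall>U x. openin X U \<and> x \<in> U \<longrightarrow> (\<exists>V\<in>\<B>. x \<in> V \<and> V \<subseteq> U))"

text \<open>w(X) \<le> continuum: there is a base of cardinality at most |UNIV :: real set| = 2^aleph0.\<close>
definition weight_le_continuum :: "'a topology \<Rightarrow> bool" where
  "weight_le_continuum X \<equiv> \<exists>\<B>. base_of_topology X \<B> \<and> \<B> \<lesssim> (UNIV :: real set)"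

end

theory Submission
  imports Defs
begin

lemma Pow_countable_lepoll_real:
  assumes "countable A" shows "Pow A \<lesssim> (UNIV :: real set)"
proof -
  have "inj_on (to_nat_on A) A" using assms by (simp add: inj_on_to_nat_on)
  then have "inj_on (\<lambda>B. to_nat_on A ` B) (Pow A)"
    by (rule inj_on_image_Pow)
  then have "Pow A \<lesssim> (UNIV :: nat set set)" unfolding lepoll_def by blast
  also have "(UNIV :: nat set set) \<lesssim> (UNIV :: real set)"
    using nat_sets_eqpoll_reals eqpoll_imp_lepoll by blast
  finally show ?thesis .
qed

theorem theorem4:
  fixes X :: "'a topology" and Y :: "'b topology" and S :: "'b set"
  assumes "regular_space X" and "Lindelof_Sigma_space X"
    and "Hausdorff_space Y" and "separable_space Y"
    and "S \<subseteq> topspace Y" and "X homeomorphic_space subtopology Y S"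
  shows "weight_le_continuum X"
proof -
  obtain f where hf: "homeomorphic_map X (subtopology Y S) f"
    using assms(6) homeomorphic_space by blast
  have cf: "continuous_map X Y f"
    using homeomorphic_imp_continuous_map[OF hf] continuous_map_in_subtopology by blast
  have injf: "inj_on f (topspace X)" using homeomorphic_imp_injective_map[OF hf] .
  obtain D where D: "countable D" "D \<subseteq> topspace Y" "Y closure_of D = topspace Y"
    using assms(4) unfolding separable_space_def by blast
  obtain \<F> \<C> where FC: "countable \<F>" "\<forall>F\<in>\<F>. closedin X F"
      "\<forall>C\<in>\<C>. closedin X C \<and> compactin X C" "topspace X = \<Union>\<C>"
      "\<forall>C\<in>\<C>. \<forall>U. openin X U \<and> C \<subseteq> U \<longrightarrow> (\<exists>F\<in>\<F>. C \<subseteq> F \<and> F \<subseteq> U)"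
    using assms(2) unfolding Lindelof_Sigma_space_def
    apply (elim conjE exE)
    apply (rule that)
        apply assumption+
    done
  define pre where "pre A = {x \<in> topspace X. f x \<in> A}" for A
  define Ob where "Ob g = topspace X - X closure_of (\<Union>F\<in>\<F>. F \<inter> pre (Y closure_of g F))" for g
  define \<B> where "\<B> = (\<lambda>R. Ob (\<lambda>F. {d. (F,d) \<in> R})) ` Pow (\<F> \<times> D)"
  have Oopen: "openin X (Ob g)" for g
    unfolding Ob_def by (simp add: openin_diff)
  have card: "\<B> \<lesssim> (UNIV :: real set)"
  proof -
    have "\<B> \<lesssim> Pow (\<F> \<times> D)" unfolding \<B>_def by (rule image_lepoll)
    also have "Pow (\<F> \<times> D) \<lesssim> (UNIV :: real set)"
      using FC(1) D(1) by (intro Pow_countable_lepoll_real) simp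
    finally show ?thesis .
  qed
  have base: "\<exists>V\<in>\<B>. x \<in> V \<and> V \<subseteq> W" if W: "openin X W" "x \<in> W" for W x
  proof -
    have c1: "closedin X (topspace X - W)" using W(1) by blast
    have c2: "x \<in> topspace X - (topspace X - W)" using W openin_subset by blast
    have "\<exists>U. openin X U \<and> x \<in> U \<and> disjnt (topspace X - W) (X closure_of U)"
      using assms(1)[unfolded regular_space, rule_format, OF conjI[OF c1 c2]] .
    then obtain U where U: "openin X U" "x \<in> U" "disjnt (topspace X - W) (X closure_of U)"
      by (elim exE conjE) (rule that)
    have clU: "X closure_of U \<subseteq> W"
      using U(3) closure_of_subset_topspace[of X U] unfolding disjnt_def by auto
    define good where "good F P \<longleftrightarrow> openin Y P \<and> F - W \<subseteq> pre P \<and>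
         disjnt (F \<inter> X closure_of U) (pre (Y closure_of P))" for F P
    define g where "g F = (if \<exists>P. good F P then (SOME P. good F P) \<inter> D else {})" for F
    have a: "F \<inter> pre (Y closure_of g F) \<inter> U = {}" for F
    proof (cases "\<exists>P. good F P")
      case True
      then have gP: "good F (SOME P. good F P)" by (rule someI_ex)
      have "Y closure_of g F \<subseteq> Y closure_of (SOME P. good F P)"
        unfolding g_def using True by (simp add: closure_of_mono)
      then show ?thesis using gP closure_of_subset[of U X] openin_subset[OF U(1)]
        unfolding good_def pre_def disjnt_def by blast
    next
      case False
      then have "g F = {}" unfolding g_def by auto
      then show ?thesis by (simp add: pre_def)
    qed
    have xO: "x \<in> Ob g"
    proof -
      have "U \<inter> (\<Union>F\<in>\<F>. F \<inter> pre (Y closure_of g F)) = {}" using a by blast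
      then have "U \<inter> X closure_of (\<Union>F\<in>\<F>. F \<inter> pre (Y closure_of g F)) = {}"
        using openin_Int_closure_of_eq_empty[OF U(1)] by blast
      then show ?thesis unfolding Ob_def using U(2) W openin_subset by blast
    qed
    have OW: "Ob g \<subseteq> W"
    proof
      fix z assume zO: "z \<in> Ob g"
      show "z \<in> W"
      proof (rule ccontr)
        assume zW: "z \<notin> W"
        have zX: "z \<in> topspace X" using zO unfolding Ob_def by blast
        then obtain C where C: "C \<in> \<C>" "z \<in> C" using FC(4) by blast
        have Ccpt: "compactin X C" and Ccl: "closedin X C" using FC(3) C(1) by auto
        define K1 where "K1 = C - W"
        define K2 where "K2 = C \<inter> X closure_of U"
        have K1c: "compactin X K1" unfolding K1_def
          by (rule closed_compactin[OF Ccpt]) (use Ccl W(1) in auto)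
        have K2c: "compactin X K2" unfolding K2_def
          by (rule closed_compactin[OF Ccpt]) (use Ccl in auto)
        have CX: "C \<subseteq> topspace X" using Ccl closedin_subset by blast
        have "disjnt (f ` K1) (f ` K2)"
          using injf CX clU unfolding K1_def K2_def disjnt_def inj_on_def by blast
        then have "\<exists>P Q. openin Y P \<and> openin Y Q \<and> f ` K1 \<subseteq> P \<and> f ` K2 \<subseteq> Q \<and> disjnt P Q"
          using assms(3)[unfolded Hausdorff_space_compact_sets, rule_format,
              OF conjI[OF image_compactin[OF K1c cf] conjI[OF image_compactin[OF K2c cf]]]] by blast
        then obtain P Q where PQ: "openin Y P" "openin Y Q" "f ` K1 \<subseteq> P" "f ` K2 \<subseteq> Q" "disjnt P Q"
          by (elim exE conjE) (rule that)
        define G where "G = (pre P \<union> W) \<inter> (pre Q \<union> (topspace X - X closure_of U))"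
        have Gopen: "openin X G" unfolding G_def pre_def
          using openin_continuous_map_preimage[OF cf PQ(1)] openin_continuous_map_preimage[OF cf PQ(2)] W(1)
          by (intro openin_Int openin_Un openin_diff) auto
        have CG: "C \<subseteq> G"
          using CX PQ(3,4) unfolding G_def pre_def K1_def K2_def by blast
        then obtain F where F: "F \<in> \<F>" "C \<subseteq> F" "F \<subseteq> G"
          using FC(5) C(1) Gopen by blast
        have QP: "Q \<inter> Y closure_of P = {}"
          using openin_Int_closure_of_eq_empty[OF PQ(2)] PQ(5) unfolding disjnt_def by blast
        have gFP: "good F P"
          unfolding good_def using PQ(1) F(3) QP unfolding G_def pre_def disjnt_def by blast
        then have ex: "\<exists>P. good F P" by blast
        let ?P = "SOME P. good F P"
        have gP: "good F ?P" using ex by (rule someI_ex)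
        have zP: "f z \<in> ?P" using gP F(2) C(2) zW unfolding good_def pre_def by blast
        have oP: "openin Y ?P" using gP unfolding good_def by simp
        have "?P \<subseteq> Y closure_of D" using openin_subset[OF oP] D(3) by simp
        then have "Y closure_of (?P \<inter> D) = Y closure_of ?P"
          using closure_of_openin_Int_superset[of Y ?P D] oP by blast
        moreover have "f z \<in> Y closure_of ?P"
          using zP closure_of_subset[OF openin_subset[OF oP]] by blast
        ultimately have "f z \<in> Y closure_of (g F)" unfolding g_def using ex by simp
        then have "z \<in> (\<Union>F\<in>\<F>. F \<inter> pre (Y closure_of g F))"
          using F(1,2) C(2) zX unfolding pre_def by blast
        moreover have "(\<Union>F\<in>\<F>. F \<inter> pre (Y closure_of g F)) \<subseteq> topspace X"
          unfolding pre_def by blast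
        ultimately show False using zO closure_of_subset[of "\<Union>F\<in>\<F>. F \<inter> pre (Y closure_of g F)" X]
          unfolding Ob_def by blast
      qed
    qed
    define R where "R = {(F,d). F \<in> \<F> \<and> d \<in> g F}"
    have gD: "g F \<subseteq> D" for F unfolding g_def by auto
    have "Ob (\<lambda>F. {d. (F,d) \<in> R}) = Ob g"
    proof -
      have eq: "\<And>F. F \<in> \<F> \<Longrightarrow> {d. (F,d) \<in> R} = g F" unfolding R_def by auto
      show ?thesis unfolding Ob_def by (simp add: eq cong: SUP_cong)
    qed
    moreover have "R \<in> Pow (\<F> \<times> D)" unfolding R_def using gD by auto
    ultimately have "Ob g \<in> \<B>" unfolding \<B>_def by (rule image_eqI[OF sym])
    then show ?thesis using xO OW by blast
  qed
  show ?thesis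
    unfolding weight_le_continuum_def base_of_topology_def
  proof (intro exI conjI ballI allI impI)
    show "\<B> \<lesssim> (UNIV :: real set)" by (rule card)
    show "openin X V" if "V \<in> \<B>" for V using that Oopen unfolding \<B>_def by auto
    show "\<exists>V\<in>\<B>. x \<in> V \<and> V \<subseteq> U" if "openin X U \<and> x \<in> U" for U x
      using base that by blast
  qed
qed

end
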